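(* Let $n\ge1$ and $\pi\in L_{n+1}$. Then there exist unique elements $\pi_j\in R_j^L$, $0\le j\le n-1$, such that $\pi=\pi_0\pi_1\cdots\pi_{n-1}$.
   Context: $B_m$ is the group of bijections $\sigma$ of $\{\pm1,\dots,\pm m\}$ with $\sigma(-i)=-\sigma(i)$, written in window notation $[\sigma(1),\dots,\sigma(m)]$, with product $(\sigma\tau)(i)=\sigma(\tau(i))$. Let $s_0=[-1,2,\dots,m]$ and $s_i=$ the transposition of $i$ and $i+1$. For $\sigma\in B_m$ let $|\sigma|$ be the permutation $i\mapsto|\sigma(i)|$, and $L_m=\{\sigma\in B_m:|\sigma|\text{ is even}\}$. In $L_{n+1}$ let $a_0=s_0$ and $a_i=s_1s_{i+1}$ for $1\le i\le n-1$. Let $R_0^L=\{1,\ a_0,\ a_1a_0a_1^{-1},\ a_0a_1a_0a_1^{-1}\}$ (here, when $n=1$, $a_1$ denotes $s_1s_2$ computed in a larger group is not needed: for $n=1$ one has $R_0^L=L_2$ as an explicit set, namely $\{[1,2],[-1,2],[1,-2],[-1,-2]\}$). For $1\le j\le n-1$ let $R_j^A=\{1,\ a_j,\ a_ja_{j-1},\ \dots,\ a_j\cdots a_2,\ a_j\cdots a_2a_1,\ a_j\cdots a_2a_1^{-1}\}$ and $R_j^L=R_j^A\cup\{a_j\cdots a_2a_1^{-1}a_0,\ a_j\cdots a_2a_1^{-1}a_0a_1^{-1}\}\cup\{a_j\cdots a_2a_1^{-1}a_0a_1a_2\cdots a_k:\ 1\le k\le j\}$, where $a_j\cdots a_2$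 is the empty product when $j=1$. *)

theory Defs
  imports "HOL-Combinatorics.Combinatorics"
begin

text \<open>Signed permutations are represented as functions on int that are odd
  (sigma(-i) = -sigma(i)), permute the set of nonzero integers of absolute value
  at most m, and fix every other integer. Product is composition:
  (sigma tau)(i) = sigma(tau(i)).\<close>

definition signed_support :: "nat \<Rightarrow> int set" where
  "signed_support m = {i. i \<noteq> 0 \<and> \<bar>i\<bar> \<le> int m}"

definition B :: "nat \<Rightarrow> (int \<Rightarrow> int) set" where
  "B m = {\<sigma>. \<sigma> permutes signed_support m \<and> (\<forall>i. \<sigma> (- i) = - \<sigma> i)}"

definition abs_perm :: "nat \<Rightarrow> (int \<Rightarrow> int) \<Rightarrow> (int \<Rightarrow> int)" where
  "abs_perm m \<sigma> = (\<lambda>i. if 1 \<le> i \<and> i \<le> int m then \<bar>\<sigma> i\<bar> else i)"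

definition L :: "nat \<Rightarrow> (int \<Rightarrow> int) set" where
  "L m = {\<sigma> \<in> B m. evenperm (abs_perm m \<sigma>)}"

definition s0 :: "int \<Rightarrow> int" where
  "s0 = (\<lambda>x. if x = 1 then -1 else if x = -1 then 1 else x)"

definition s :: "nat \<Rightarrow> int \<Rightarrow> int" where
  "s i = (\<lambda>x. if x = int i then int i + 1 else if x = int i + 1 then int i
              else if x = - int i then - (int i + 1) else if x = - (int i + 1) then - int i
              else x)"

definition a :: "nat \<Rightarrow> int \<Rightarrow> int" where
  "a i = (if i = 0 then s0 else s 1 \<circ> s (i + 1))"

text \<open>desc j k = a_j a_{j-1} ... a_k (empty product = identity if k > j).\<close>
definition desc :: "nat \<Rightarrow> nat \<Rightarrow> int \<Rightarrow> int" where
  "desc j k = foldr (\<circ>) (map a (rev [k..<Suc j])) id"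

definition asc :: "nat \<Rightarrow> nat \<Rightarrow> int \<Rightarrow> int" where
  "asc k l = foldr (\<circ>) (map a [k..<Suc l]) id"

definition R0L :: "nat \<Rightarrow> (int \<Rightarrow> int) set" where
  "R0L n = (if n = 1 then L 2
            else {id, a 0, a 1 \<circ> a 0 \<circ> inv (a 1), a 0 \<circ> a 1 \<circ> a 0 \<circ> inv (a 1)})"

definition RA :: "nat \<Rightarrow> (int \<Rightarrow> int) set" where
  "RA j = {desc j k | k. 1 \<le> k \<and> k \<le> j + 1} \<union> {desc j 2 \<circ> inv (a 1)}"

definition RL :: "nat \<Rightarrow> nat \<Rightarrow> (int \<Rightarrow> int) set" where
  "RL n j = (if j = 0 then R0L n else
     RA j \<union> {desc j 2 \<circ> inv (a 1) \<circ> a 0, desc j 2 \<circ> inv (a 1) \<circ> a 0 \<circ> inv (a 1)}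
          \<union> {desc j 2 \<circ> inv (a 1) \<circ> a 0 \<circ> asc 1 k | k. 1 \<le> k \<and> k \<le> j})"

end

theory Submission
  imports Defs
begin


lemma B_odd: "\<sigma> \<in> B m \<Longrightarrow> \<sigma> (- i) = - \<sigma> i" by (simp add: B_def)
lemma B_perm: "\<sigma> \<in> B m \<Longrightarrow> \<sigma> permutes signed_support m" by (simp add: B_def)

lemma B_comp: "\<sigma> \<in> B m \<Longrightarrow> \<rho> \<in> B m \<Longrightarrow> \<sigma> \<circ> \<rho> \<in> B m"
  unfolding B_def by (auto intro: permutes_compose)

lemma B_id: "id \<in> B m" unfolding B_def by auto

lemma B_inv: assumes "\<sigma> \<in> B m" shows "inv \<sigma> \<in> B m"
proof -
  have p: "\<sigma> permutes signed_support m" using assms by (simp add: B_def)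
  have "inv \<sigma> (- i) = - inv \<sigma> i" for i
  proof -
    have "\<sigma> (- inv \<sigma> i) = - i" using B_odd[OF assms] permutes_inverses(1)[OF p] by simp
    then have "inv \<sigma> (\<sigma> (- inv \<sigma> i)) = inv \<sigma> (- i)" by simp
    then show ?thesis using permutes_inverses(2)[OF p] by simp
  qed
  then show ?thesis using permutes_inv[OF p] by (simp add: B_def)
qed

lemma B_in: assumes "\<sigma> \<in> B m" "x \<in> signed_support m" shows "\<sigma> x \<in> signed_support m"
  using permutes_in_image[OF B_perm[OF assms(1)]] assms(2) by simp

lemma B_out: assumes "\<sigma> \<in> B m" "x \<notin> signed_support m" shows "\<sigma> x = x"
  using permutes_not_in[OF B_perm[OF assms(1)] assms(2)] .

lemma abs_in_supp: "1 \<le> i \<Longrightarrow> i \<le> int m \<Longrightarrow> \<sigma> \<in> B m \<Longrightarrow> 1 \<le> \<bar>\<sigma> i\<bar> \<and> \<bar>\<sigma> i\<bar> \<le> int m"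
  using B_in[of \<sigma> m i] by (auto simp: signed_support_def)

lemma B_abs: "\<sigma> \<in> B m \<Longrightarrow> \<bar>\<sigma> \<bar>x\<bar>\<bar> = \<bar>\<sigma> x\<bar>"
  using B_odd[of \<sigma> m x] by (cases "x \<ge> 0") auto

lemma abs_perm_comp: assumes "\<sigma> \<in> B m" "\<rho> \<in> B m"
  shows "abs_perm m (\<sigma> \<circ> \<rho>) = abs_perm m \<sigma> \<circ> abs_perm m \<rho>"
proof
  fix i
  show "abs_perm m (\<sigma> \<circ> \<rho>) i = (abs_perm m \<sigma> \<circ> abs_perm m \<rho>) i"
  proof (cases "1 \<le> i \<and> i \<le> int m")
    case True
    then show ?thesis using abs_in_supp[OF _ _ assms(2), of i] B_abs[OF assms(1), of "\<rho> i"]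
      by (simp add: abs_perm_def)
  next
    case False
    then have "abs_perm m \<rho> i = i" "abs_perm m \<sigma> i = i" "abs_perm m (\<sigma> \<circ> \<rho>) i = i"
      unfolding abs_perm_def by auto
    then show ?thesis by simp
  qed
qed

lemma abs_perm_id: "abs_perm m id = id"
  by (auto simp: abs_perm_def fun_eq_iff)

lemma abs_perm_permutes: assumes "\<sigma> \<in> B m" shows "abs_perm m \<sigma> permutes {1..int m}"
proof -
  have i: "inv \<sigma> \<in> B m" using B_inv assms by auto
  have p: "\<sigma> permutes signed_support m" using assms by (simp add: B_def)
  have e1: "abs_perm m \<sigma> \<circ> abs_perm m (inv \<sigma>) = id"
    unfolding abs_perm_comp[OF assms i, symmetric] permutes_inv_o(1)[OF p] abs_perm_id ..
  have e2: "abs_perm m (inv \<sigma>) \<circ> abs_perm m \<sigma> = id"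
    unfolding abs_perm_comp[OF i assms, symmetric] permutes_inv_o(2)[OF p] abs_perm_id ..
  have "bij (abs_perm m \<sigma>)" using e1 e2 o_bij by blast
  then have "\<forall>y. \<exists>!x. abs_perm m \<sigma> x = y" by (simp add: bij_iff)
  moreover have "\<forall>x. x \<notin> {1..int m} \<longrightarrow> abs_perm m \<sigma> x = x" by (simp add: abs_perm_def)
  ultimately show ?thesis unfolding permutes_def by blast
qed

lemma abs_perm_permutation: "\<sigma> \<in> B m \<Longrightarrow> permutation (abs_perm m \<sigma>)"
  using abs_perm_permutes permutation_permutes by blast

lemma abs_perm_inv: assumes "\<sigma> \<in> B m" shows "abs_perm m (inv \<sigma>) = inv (abs_perm m \<sigma>)"
proof -
  have i: "inv \<sigma> \<in> B m" using B_inv assms by auto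
  have p: "\<sigma> permutes signed_support m" using assms by (simp add: B_def)
  have e1: "abs_perm m \<sigma> \<circ> abs_perm m (inv \<sigma>) = id"
    unfolding abs_perm_comp[OF assms i, symmetric] permutes_inv_o(1)[OF p] abs_perm_id ..
  have e2: "abs_perm m (inv \<sigma>) \<circ> abs_perm m \<sigma> = id"
    unfolding abs_perm_comp[OF i assms, symmetric] permutes_inv_o(2)[OF p] abs_perm_id ..
  show ?thesis using inv_unique_comp[OF e1 e2] by simp
qed

lemma L_comp: assumes "\<sigma> \<in> L m" "\<rho> \<in> L m" shows "\<sigma> \<circ> \<rho> \<in> L m"
proof -
  have b: "\<sigma> \<in> B m" "\<rho> \<in> B m" and e: "evenperm (abs_perm m \<sigma>)" "evenperm (abs_perm m \<rho>)"
    using assms by (auto simp: L_def)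
  have "evenperm (abs_perm m (\<sigma> \<circ> \<rho>))"
    unfolding abs_perm_comp[OF b] evenperm_comp[OF abs_perm_permutation[OF b(1)] abs_perm_permutation[OF b(2)]]
    using e by simp
  then show ?thesis using B_comp[OF b] by (simp add: L_def)
qed

lemma L_inv: assumes "\<sigma> \<in> L m" shows "inv \<sigma> \<in> L m"
proof -
  have b: "\<sigma> \<in> B m" and e: "evenperm (abs_perm m \<sigma>)"
    using assms by (auto simp: L_def)
  have "evenperm (abs_perm m (inv \<sigma>))"
    unfolding abs_perm_inv[OF b] evenperm_inv[OF abs_perm_permutation[OF b]] by (rule e)
  then show ?thesis using B_inv[OF b] by (simp add: L_def)
qed

lemma L_id: "id \<in> L m" unfolding L_def using B_id abs_perm_id by simp

lemma supp_mono: "signed_support m \<subseteq> signed_support (Suc m)"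
  by (auto simp: signed_support_def)

lemma abs_perm_Suc: assumes "\<sigma> (int m + 1) = int m + 1"
  shows "abs_perm (Suc m) \<sigma> = abs_perm m \<sigma>"
proof
  fix x show "abs_perm (Suc m) \<sigma> x = abs_perm m \<sigma> x"
  proof (cases "x = int m + 1")
    case True then show ?thesis using assms by (simp add: abs_perm_def)
  next
    case False
    then have "(1 \<le> x \<and> x \<le> int (Suc m)) = (1 \<le> x \<and> x \<le> int m)" by auto
    then show ?thesis by (simp only: abs_perm_def)
  qed
qed

lemma L_mono: assumes "\<sigma> \<in> L m" shows "\<sigma> \<in> L (Suc m)"
proof -
  have b: "\<sigma> \<in> B m" using assms by (simp add: L_def)
  have "\<sigma> (int m + 1) = int m + 1" using B_out[OF b] by (simp add: signed_support_def)
  then have "abs_perm (Suc m) \<sigma> = abs_perm m \<sigma>" by (rule abs_perm_Suc)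
  moreover have "\<sigma> \<in> B (Suc m)" using b permutes_subset[OF _ supp_mono] by (auto simp: B_def)
  ultimately show ?thesis using assms by (simp add: L_def)
qed

lemma L_mono': "m \<le> k \<Longrightarrow> \<sigma> \<in> L m \<Longrightarrow> \<sigma> \<in> L k"
proof (induction k rule: dec_induct)
  case base then show ?case by simp
next
  case (step k) then show ?case using L_mono by blast
qed

lemma L_fix: assumes "\<sigma> \<in> L (Suc m)" "\<sigma> (int m + 1) = int m + 1" shows "\<sigma> \<in> L m"
proof -
  have b: "\<sigma> \<in> B (Suc m)" using assms by (simp add: L_def)
  have f2: "\<sigma> (- (int m + 1)) = - (int m + 1)" using B_odd[OF b, of "int m + 1"] assms(2) by simp
  have "abs_perm (Suc m) \<sigma> = abs_perm m \<sigma>"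
    using assms(2) by (rule abs_perm_Suc)
  moreover have "\<sigma> \<in> B m"
  proof -
    have p: "\<sigma> permutes signed_support (Suc m)" using b by (simp add: B_def)
    have eq: "signed_support m = signed_support (Suc m) - {int m + 1, - (int m + 1)}"
      by (auto simp: signed_support_def)
    have "bij_betw \<sigma> (signed_support m) (signed_support m)"
    proof -
      have "bij_betw \<sigma> (signed_support (Suc m)) (signed_support (Suc m))"
        using p permutes_imp_bij by blast
      then have "bij_betw \<sigma> (signed_support (Suc m) - {int m + 1, - (int m + 1)})
          (\<sigma> ` (signed_support (Suc m) - {int m + 1, - (int m + 1)}))"
        using bij_betw_subset by blast
      moreover have "\<sigma> ` (signed_support (Suc m) - {int m + 1, - (int m + 1)})
           = signed_support (Suc m) - {int m + 1, - (int m + 1)}"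
        using permutes_image[OF p] permutes_inj[OF p] assms(2) f2
        by (simp add: image_set_diff)
      ultimately show ?thesis using eq by simp
    qed
    moreover have "x \<notin> signed_support m \<Longrightarrow> \<sigma> x = x" for x
      using permutes_not_in[OF p, of x] assms(2) f2 eq by (cases "x \<in> signed_support (Suc m)") auto
    ultimately have "\<sigma> permutes signed_support m" by (rule bij_imp_permutes)
    then show ?thesis using b by (simp add: B_def)
  qed
  ultimately show ?thesis using assms by (simp add: L_def)
qed



lemma invol_B:
  assumes inv: "\<And>x. f (f x) = x" and out: "\<And>x. x \<notin> signed_support m \<Longrightarrow> f x = x"
    and odd: "\<And>x. f (- x) = - f x"
  shows "f \<in> B m"
proof -
  have "\<forall>y. \<exists>!x. f x = y" using inv by metis
  then have "f permutes signed_support m" unfolding permutes_def using out by blast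
  then show ?thesis using odd by (simp add: B_def)
qed

lemma s0_B: "s0 \<in> B m" if "m \<ge> 1"
  by (rule invol_B) (use that in \<open>auto simp: s0_def signed_support_def\<close>)

lemma s_B: "s k \<in> B m" if "k \<ge> 1" "k + 1 \<le> m"
  by (rule invol_B) (use that in \<open>auto simp: s_def signed_support_def\<close>)

lemma abs_perm_s0: "abs_perm m s0 = id"
  by (auto simp: abs_perm_def s0_def fun_eq_iff)

lemma abs_perm_s: "abs_perm m (s k) = Transposition.transpose (int k) (int k + 1)" if "k \<ge> 1" "k + 1 \<le> m"
  using that by (auto simp: abs_perm_def s_def fun_eq_iff Transposition.transpose_def)

lemma s0_L: "s0 \<in> L m" if "m \<ge> 1"
  using s0_B[OF that] abs_perm_s0 by (simp add: L_def)

lemma a_L: "a i \<in> L m" if "i + 2 \<le> m"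
proof (cases "i = 0")
  case True then show ?thesis using s0_L[of m] that by (simp add: a_def)
next
  case False
  have b1: "s 1 \<in> B m" and b2: "s (i+1) \<in> B m" using that False by (auto intro!: s_B)
  have "abs_perm m (a i) = Transposition.transpose 1 2 \<circ> Transposition.transpose (int i + 1) (int i + 2)"
    using False that abs_perm_comp[OF b1 b2] abs_perm_s[of 1 m] abs_perm_s[of "i+1" m]
    by (simp add: a_def add.commute)
  then have "evenperm (abs_perm m (a i))"
    by (simp add: evenperm_comp permutation_swap_id evenperm_swap)
  then show ?thesis using B_comp[OF b1 b2] False by (simp add: L_def a_def)
qed

lemma foldr_comp_id: "foldr (\<circ>) fs g = foldr (\<circ>) fs id \<circ> g"
  by (induction fs) auto

lemma foldr_L: "(\<And>f. f \<in> set fs \<Longrightarrow> f \<in> L m) \<Longrightarrow> foldr (\<circ>) fs id \<in> L m"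
  by (induction fs) (auto intro: L_comp L_id)

lemma desc_L: "desc j k \<in> L (j + 2)"
  unfolding desc_def by (rule foldr_L) (auto intro: a_L)

lemma asc_L: "asc k l \<in> L (l + 2)"
  unfolding asc_def by (rule foldr_L) (auto intro: a_L)

lemma desc_Suc: "k \<le> Suc j \<Longrightarrow> desc (Suc j) k = a (Suc j) \<circ> desc j k"
  unfolding desc_def by (simp add: upt_Suc_append)

lemma desc_id: "desc j (Suc j) = id"
  unfolding desc_def by simp

lemma asc_Suc: "asc 1 (Suc k) = asc 1 k \<circ> a (Suc k)"
proof -
  have e: "[1..<Suc (Suc k)] = [1..<Suc k] @ [Suc k]" by simp
  show ?thesis unfolding asc_def e map_append foldr_append
    using foldr_comp_id[of "map a [1..<Suc k]" "a (Suc k)"] by simp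
qed

lemma asc_1: "asc 1 1 = a 1"
  unfolding asc_def by simp

lemma a_up: "k \<ge> 1 \<Longrightarrow> a k (int k + 1) = int k + 2"
  by (simp add: a_def s_def)

lemma a_up': "a (Suc j) (int j + 2) = int j + 3"
  by (simp add: a_def s_def)

lemma a_down: "k \<ge> 1 \<Longrightarrow> a (Suc k) (- (int k + 3)) = - (int k + 2)"
  by (simp add: a_def s_def)

lemma a1_vals: "a 1 3 = 1" "a 1 (-1) = -2" "a 1 (-3) = -1" "a 0 (-1) = 1"
  by (simp_all add: a_def s_def s0_def)

lemma desc_val: "1 \<le> k \<Longrightarrow> k \<le> j + 1 \<Longrightarrow> desc j k (int k + 1) = int j + 2"
proof (induction j arbitrary: k)
  case 0 then have "k = 1" by simp
  then show ?case using desc_id[of 0] by simp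
next
  case (Suc j)
  show ?case
  proof (cases "k = Suc j + 1")
    case True then show ?thesis using desc_id[of "Suc j"] by simp
  next
    case False
    then have "k \<le> Suc j" using Suc.prems by simp
    then show ?thesis using desc_Suc[of k j] Suc.IH[of k] Suc.prems a_up'[of j] by simp
  qed
qed

lemma asc_val: "1 \<le> k \<Longrightarrow> asc 1 k (- (int k + 2)) = -1"
proof (induction k rule: dec_induct)
  case base then show ?case using asc_1 a1_vals by simp
next
  case (step k) then show ?case using asc_Suc[of k] a_down[of k] by (simp add: add.commute)
qed



definition F :: "nat \<Rightarrow> int \<Rightarrow> int \<Rightarrow> int" where
  "F j v = (if v = int j + 2 then id
    else if 2 \<le> v \<and> v \<le> int j + 1 then desc j (nat v - 1)
    else if v = 1 then desc j 2 \<circ> inv (a 1)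
    else if v = -1 then desc j 2 \<circ> inv (a 1) \<circ> a 0
    else if v = -2 then desc j 2 \<circ> inv (a 1) \<circ> a 0 \<circ> inv (a 1)
    else desc j 2 \<circ> inv (a 1) \<circ> a 0 \<circ> asc 1 (nat (- v) - 2))"

lemma a1_inj: "inj (a 1)"
proof -
  have "a 1 \<in> B 3" using a_L[of 1 3] by (simp add: L_def)
  then show ?thesis using permutes_inj B_perm by blast
qed

lemma inv_a1_vals: "inv (a 1) 1 = 3" "inv (a 1) (-2) = -1"
  using inv_f_eq[OF a1_inj a1_vals(1)] inv_f_eq[OF a1_inj a1_vals(2)] by auto

lemma F_val: assumes "j \<ge> 1" "v \<in> signed_support (j + 2)" shows "F j v v = int j + 2"
proof -
  have v: "v \<noteq> 0" "\<bar>v\<bar> \<le> int j + 2" using assms(2) by (auto simp: signed_support_def)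
  have d2: "desc j 2 3 = int j + 2" using desc_val[of 2 j] assms(1) by simp
  consider "v = int j + 2" | "2 \<le> v \<and> v \<le> int j + 1" | "v = 1" | "v = -1" | "v = -2"
    | "v \<le> -3" using v by linarith
  then show ?thesis
  proof cases
    case 1 then show ?thesis by (simp add: F_def)
  next
    case 2
    then have "F j v = desc j (nat v - 1)" by (simp add: F_def)
    moreover have "desc j (nat v - 1) (int (nat v - 1) + 1) = int j + 2"
      using 2 by (intro desc_val) auto
    moreover have "int (nat v - 1) + 1 = v" using 2 by arith
    ultimately show ?thesis by simp
  next
    case 3 then show ?thesis using d2 inv_a1_vals by (simp add: F_def)
  next
    case 4 then show ?thesis using d2 inv_a1_vals a1_vals by (simp add: F_def)
  next
    case 5 then show ?thesis using d2 inv_a1_vals a1_vals by (simp add: F_def)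
  next
    case 6
    define k where "k = nat (- v) - 2"
    have k: "1 \<le> k" "v = - (int k + 2)" using 6 by (auto simp: k_def)
    have "F j v = desc j 2 \<circ> inv (a 1) \<circ> a 0 \<circ> asc 1 k" using 6 by (simp add: F_def k_def)
    then show ?thesis using asc_val[OF k(1)] k(2) d2 inv_a1_vals a1_vals by simp
  qed
qed

lemma F_L: assumes "j \<ge> 1" "v \<in> signed_support (j + 2)" shows "F j v \<in> L (j + 2)"
proof -
  have d: "desc j k \<in> L (j + 2)" for k by (rule desc_L)
  have i: "inv (a 1) \<in> L (j + 2)" using assms(1) by (intro L_inv a_L) simp
  have a0: "a 0 \<in> L (j + 2)" by (rule a_L) simp
  have as: "asc 1 k \<in> L (j + 2)" if "k \<le> j" for k by (rule L_mono'[OF _ asc_L]) (use that in simp)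
  have v: "\<bar>v\<bar> \<le> int j + 2" using assms(2) by (auto simp: signed_support_def)
  then have "nat (- v) - 2 \<le> j" by linarith
  then show ?thesis unfolding F_def using d i a0 as[of "nat (- v) - 2"] L_id
    by (simp add: L_comp)
qed

lemma RL_F: assumes "j \<ge> 1" "r \<in> RL n j" shows "\<exists>v \<in> signed_support (j + 2). r = F j v"
proof -
  have "r \<in> RA j \<union> {desc j 2 \<circ> inv (a 1) \<circ> a 0, desc j 2 \<circ> inv (a 1) \<circ> a 0 \<circ> inv (a 1)}
          \<union> {desc j 2 \<circ> inv (a 1) \<circ> a 0 \<circ> asc 1 k | k. 1 \<le> k \<and> k \<le> j}"
    using assms by (simp add: RL_def)
  then consider (d) k where "1 \<le> k" "k \<le> j + 1" "r = desc j k" | (one) "r = desc j 2 \<circ> inv (a 1)"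
    | (m1) "r = desc j 2 \<circ> inv (a 1) \<circ> a 0" | (m2) "r = desc j 2 \<circ> inv (a 1) \<circ> a 0 \<circ> inv (a 1)"
    | (as) k where "1 \<le> k" "k \<le> j" "r = desc j 2 \<circ> inv (a 1) \<circ> a 0 \<circ> asc 1 k"
    unfolding RA_def by blast
  then show ?thesis
  proof cases
    case (d k)
    show ?thesis
    proof (cases "k = j + 1")
      case True
      then show ?thesis using d desc_id[of j]
        by (intro bexI[of _ "int j + 2"]) (auto simp: F_def signed_support_def)
    next
      case False
      have "nat (int k + 1) - 1 = k" by arith
      then show ?thesis using d False
        by (intro bexI[of _ "int k + 1"]) (auto simp: F_def signed_support_def)
    qed
  next
    case one then show ?thesis by (intro bexI[of _ 1]) (auto simp: F_def signed_support_def)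
  next
    case m1 then show ?thesis by (intro bexI[of _ "-1"]) (auto simp: F_def signed_support_def)
  next
    case m2 then show ?thesis by (intro bexI[of _ "-2"]) (auto simp: F_def signed_support_def)
  next
    case (as k)
    have "nat (2 + int k) - 2 = k" by arith
    then show ?thesis using as
      by (intro bexI[of _ "- (int k + 2)"]) (auto simp: F_def signed_support_def)
  qed
qed

lemma F_RL: assumes "j \<ge> 1" "v \<in> signed_support (j + 2)" shows "F j v \<in> RL n j"
proof -
  have v: "v \<noteq> 0" "\<bar>v\<bar> \<le> int j + 2" using assms(2) by (auto simp: signed_support_def)
  consider "v = int j + 2" | "2 \<le> v \<and> v \<le> int j + 1" | "v = 1" | "v = -1" | "v = -2"
    | "v \<le> -3" using v by linarith
  then show ?thesis
  proof cases
    case 1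
    then have "F j v = desc j (j + 1)" using desc_id[of j] by (simp add: F_def)
    then show ?thesis using assms(1) by (auto simp: RL_def RA_def)
  next
    case 2
    then have "F j v = desc j (nat v - 1)" by (simp add: F_def)
    moreover have "1 \<le> nat v - 1" "nat v - 1 \<le> j + 1" using 2 by auto
    ultimately show ?thesis using assms(1) by (auto simp: RL_def RA_def)
  next
    case 3 then show ?thesis using assms(1) by (auto simp: RL_def RA_def F_def)
  next
    case 4 then show ?thesis using assms(1) by (auto simp: RL_def RA_def F_def)
  next
    case 5 then show ?thesis using assms(1) by (auto simp: RL_def RA_def F_def)
  next
    case 6
    define k where "k = nat (- v) - 2"
    have k: "1 \<le> k" "k \<le> j" using 6 v by (auto simp: k_def)
    have "F j v = desc j 2 \<circ> inv (a 1) \<circ> a 0 \<circ> asc 1 k" using 6 by (simp add: F_def k_def)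
    then show ?thesis using assms(1) k by (auto simp: RL_def)
  qed
qed



definition c1 :: "int \<Rightarrow> int" where
  "c1 = (\<lambda>x. if x = 2 then -2 else if x = -2 then 2 else x)"

lemma a1_perm: "a 1 permutes signed_support 3"
  using a_L[of 1 3] by (simp add: L_def B_def)

lemma conj_c1: "a 1 \<circ> a 0 \<circ> inv (a 1) = c1"
proof -
  have "a 1 \<circ> a 0 = c1 \<circ> a 1"
  proof
    fix x :: int
    consider "x = 1" | "x = -1" | "x = 2" | "x = -2" | "x = 3" | "x = -3"
      | "x \<notin> {1, -1, 2, -2, 3, -3}" by blast
    then show "(a 1 \<circ> a 0) x = (c1 \<circ> a 1) x"
      by cases (simp_all add: a_def s_def s0_def c1_def)
  qed
  then have "a 1 \<circ> a 0 \<circ> inv (a 1) = c1 \<circ> (a 1 \<circ> inv (a 1))" by (simp add: o_assoc)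
  then show ?thesis using permutes_inv_o(1)[OF a1_perm] by simp
qed

lemma c1_L: "c1 \<in> L 2"
proof -
  have "c1 \<in> B 2" by (rule invol_B) (auto simp: c1_def signed_support_def)
  moreover have "abs_perm 2 c1 = id" by (auto simp: abs_perm_def c1_def fun_eq_iff)
  ultimately show ?thesis by (simp add: L_def)
qed

lemma B2_form: assumes "\<sigma> \<in> B 2"
  shows "\<sigma> = (\<lambda>x. if x = 1 then \<sigma> 1 else if x = -1 then - \<sigma> 1 else if x = 2 then \<sigma> 2
                   else if x = -2 then - \<sigma> 2 else x)"
proof
  fix x
  show "\<sigma> x = (if x = 1 then \<sigma> 1 else if x = -1 then - \<sigma> 1 else if x = 2 then \<sigma> 2
                   else if x = -2 then - \<sigma> 2 else x)"
  proof (cases "x \<in> signed_support 2")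
    case True
    then have "x = 1 \<or> x = -1 \<or> x = 2 \<or> x = -2" by (auto simp: signed_support_def)
    then show ?thesis using B_odd[OF assms, of 1] B_odd[OF assms, of 2] by (elim disjE) simp_all
  next
    case False
    then have "x \<noteq> 1 \<and> x \<noteq> -1 \<and> x \<noteq> 2 \<and> x \<noteq> -2" by (auto simp: signed_support_def)
    then show ?thesis using B_out[OF assms False] by simp
  qed
qed

lemma B2_eq: assumes "\<sigma> \<in> B 2" "\<tau> \<in> B 2" "\<sigma> 1 = \<tau> 1" "\<sigma> 2 = \<tau> 2" shows "\<sigma> = \<tau>"
  using B2_form[OF assms(1)] B2_form[OF assms(2)] assms(3,4) by metis

lemma L2_sub: assumes "\<sigma> \<in> L 2" shows "\<sigma> \<in> {id, s0, c1, s0 \<circ> c1}"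
proof -
  have b: "\<sigma> \<in> B 2" and e: "evenperm (abs_perm 2 \<sigma>)" using assms by (auto simp: L_def)
  have inj: "inj \<sigma>" using permutes_inj[OF B_perm[OF b]] .
  have s1: "\<sigma> 1 \<in> signed_support 2" and s2: "\<sigma> 2 \<in> signed_support 2"
  proof -
    have "(1::int) \<in> signed_support 2" "(2::int) \<in> signed_support 2" by (simp_all add: signed_support_def)
    then show "\<sigma> 1 \<in> signed_support 2" "\<sigma> 2 \<in> signed_support 2" using B_in[OF b] by blast+
  qed
  have n1a: "\<sigma> 1 \<noteq> \<sigma> 2"
  proof
    assume "\<sigma> 1 = \<sigma> 2" then have "(1::int) = 2" using injD[OF inj] by blast
    then show False by simp
  qed
  have n1b: "\<sigma> 1 \<noteq> - \<sigma> 2"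
  proof
    assume "\<sigma> 1 = - \<sigma> 2" then have "\<sigma> 1 = \<sigma> (-2)" using B_odd[OF b, of 2] by simp
    then have "(1::int) = -2" using injD[OF inj] by blast
    then show False by simp
  qed
  have ab: "\<bar>\<sigma> 1\<bar> = 1 \<and> \<bar>\<sigma> 2\<bar> = 2"
  proof (rule ccontr)
    assume "\<not> ?thesis"
    then have "\<bar>\<sigma> 1\<bar> = 2 \<and> \<bar>\<sigma> 2\<bar> = 1" using s1 s2 n1a n1b by (auto simp: signed_support_def)
    then have "abs_perm 2 \<sigma> = Transposition.transpose 1 2"
      by (auto simp: abs_perm_def fun_eq_iff Transposition.transpose_def)
    then show False using e by (simp add: evenperm_swap)
  qed
  then have "\<sigma> 1 = 1 \<or> \<sigma> 1 = -1" "\<sigma> 2 = 2 \<or> \<sigma> 2 = -2" by auto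
  moreover have bb: "id \<in> B 2" "s0 \<in> B 2" "c1 \<in> B 2" "s0 \<circ> c1 \<in> B 2"
    using L_id s0_L[of 2] c1_L L_comp[OF s0_L c1_L] by (auto simp: L_def)
  moreover have vv: "s0 1 = -1" "s0 2 = 2" "c1 1 = 1" "c1 2 = -2" "(s0 \<circ> c1) 1 = -1" "(s0 \<circ> c1) 2 = -2"
    by (simp_all add: s0_def c1_def)
  ultimately consider "\<sigma> 1 = id 1 \<and> \<sigma> 2 = id 2" | "\<sigma> 1 = s0 1 \<and> \<sigma> 2 = s0 2"
    | "\<sigma> 1 = c1 1 \<and> \<sigma> 2 = c1 2" | "\<sigma> 1 = (s0 \<circ> c1) 1 \<and> \<sigma> 2 = (s0 \<circ> c1) 2"
    by (metis id_apply)
  then show ?thesis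
  proof cases
    case 1 then show ?thesis using B2_eq[OF b bb(1)] by blast
  next
    case 2 then show ?thesis using B2_eq[OF b bb(2)] by blast
  next
    case 3 then show ?thesis using B2_eq[OF b bb(3)] by blast
  next
    case 4 then show ?thesis using B2_eq[OF b bb(4)] by blast
  qed
qed

lemma R0L_eq: "n \<ge> 1 \<Longrightarrow> R0L n = L 2"
proof (cases "n = 1")
  case False
  have a0: "a 0 = s0" by (simp add: a_def)
  have c': "a 1 \<circ> s0 \<circ> inv (a 1) = c1" using conj_c1 a0 by simp
  have h: "s0 \<circ> a 1 \<circ> s0 \<circ> inv (a 1) = s0 \<circ> c1"
    unfolding c'[symmetric] by (simp only: o_assoc)
  have eq: "R0L n = {id, s0, c1, s0 \<circ> c1}" 
    unfolding R0L_def a0 c' h using False by simp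
  have "{id, s0, c1, s0 \<circ> c1} \<subseteq> L 2"
    using L_id s0_L[of 2] c1_L L_comp[OF s0_L c1_L] by auto
  moreover have "L 2 \<subseteq> {id, s0, c1, s0 \<circ> c1}" using L2_sub by blast
  ultimately show ?thesis using eq by blast
qed (simp add: R0L_def)



definition RLx :: "nat \<Rightarrow> (int \<Rightarrow> int) set" where
  "RLx j = (if j = 0 then L 2 else RL 1 j)"

definition good :: "nat \<Rightarrow> (int \<Rightarrow> int) list \<Rightarrow> bool" where
  "good n ps \<longleftrightarrow> length ps = n \<and> (\<forall>j<n. ps ! j \<in> RLx j)"

lemma RL_eq: "n \<ge> 1 \<Longrightarrow> RL n j = RLx j"
  using R0L_eq by (simp add: RL_def RLx_def)

lemma RLx_L: assumes "x \<in> RLx j" shows "x \<in> L (j + 2)"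
proof (cases "j = 0")
  case True then show ?thesis using assms by (simp add: RLx_def numeral_2_eq_2)
next
  case False
  then obtain v where "v \<in> signed_support (j + 2)" "x = F j v"
    using RL_F[of j x 1] assms by (auto simp: RLx_def)
  then show ?thesis using F_L[of j v] False by simp
qed

lemma good_L: assumes "good n ps" "n \<ge> 1" shows "foldr (\<circ>) ps id \<in> L (n + 1)"
proof (rule foldr_L)
  fix f assume "f \<in> set ps"
  then obtain j where j: "j < n" "f = ps ! j" using assms(1) by (auto simp: good_def in_set_conv_nth)
  have fL: "f \<in> L (j + 2)" using assms(1) RLx_L j by (auto simp: good_def)
  show "f \<in> L (n + 1)" using L_mono'[OF _ fL] j by simp
qed

lemma perm_L: "\<sigma> \<in> L m \<Longrightarrow> \<sigma> permutes signed_support m"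
  by (simp add: L_def B_def)

lemma foldr_snoc: "foldr (\<circ>) (xs @ [f]) id = foldr (\<circ>) xs id \<circ> f"
  by (induction xs) auto

lemma existence: "1 \<le> n \<Longrightarrow> \<pi> \<in> L (n + 1) \<Longrightarrow> \<exists>ps. good n ps \<and> \<pi> = foldr (\<circ>) ps id"
proof (induction n arbitrary: \<pi> rule: dec_induct)
  case base
  then have "good 1 [\<pi>]" by (simp add: good_def RLx_def numeral_2_eq_2)
  then show ?case by auto
next
  case (step n)
  have pp: "\<pi> permutes signed_support (n + 2)" using step.prems perm_L by simp
  define v where "v = inv \<pi> (int n + 2)"
  have v: "v \<in> signed_support (n + 2)" unfolding v_def
    using permutes_in_image[OF permutes_inv[OF pp]] by (simp add: signed_support_def)
  have pv: "\<pi> v = int n + 2" unfolding v_def using permutes_inverses(1)[OF pp] by simp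
  define r where "r = F n v"
  have rL: "r \<in> L (n + 2)" unfolding r_def using F_L[OF step.hyps(1) v] .
  have rv: "r v = int n + 2" unfolding r_def using F_val[OF step.hyps(1) v] .
  have rR: "r \<in> RLx n" unfolding r_def RLx_def using F_RL[OF step.hyps(1) v, of 1] step.hyps(1) by simp
  have rp: "r permutes signed_support (n + 2)" using perm_L[OF rL] .
  have ir: "inv r (int n + 2) = v" using inv_f_eq[OF permutes_inj[OF rp] rv] .
  define \<tau> where "\<tau> = \<pi> \<circ> inv r"
  have tL: "\<tau> \<in> L (Suc (n + 1))" unfolding \<tau>_def using L_comp[OF _ L_inv[OF rL]] step.prems by simp
  have tf: "\<tau> (int (n + 1) + 1) = int (n + 1) + 1"
  proof -
    have h: "int (n + 1) + 1 = int n + 2" by simp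
    show ?thesis unfolding h \<tau>_def comp_apply ir pv by (rule refl)
  qed
  have "\<tau> \<in> L (n + 1)" using L_fix[OF tL tf] .
  then obtain ps where ps: "good n ps" "\<tau> = foldr (\<circ>) ps id" using step.IH by blast
  have "\<pi> = \<tau> \<circ> r" unfolding \<tau>_def using permutes_inv_o(2)[OF rp] by (simp add: comp_assoc)
  also have "\<dots> = foldr (\<circ>) (ps @ [r]) id" using ps(2) foldr_comp_id[of ps r] by simp
  finally have e: "\<pi> = foldr (\<circ>) (ps @ [r]) id" .
  have "good (Suc n) (ps @ [r])" using ps(1) rR
    by (auto simp: good_def nth_append less_Suc_eq)
  then show ?case using e by blast
qed

lemma uniqueness: "1 \<le> n \<Longrightarrow> good n ps \<Longrightarrow> good n qs \<Longrightarrow> foldr (\<circ>) ps id = foldr (\<circ>) qs id \<Longrightarrow> ps = qs"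
proof (induction n arbitrary: ps qs rule: dec_induct)
  case base
  then obtain p q where "ps = [p]" "qs = [q]" by (auto simp: good_def length_Suc_conv)
  then show ?case using base by simp
next
  case (step n)
  obtain ps' p where ps: "ps = ps' @ [p]" using step.prems(1)
    by (metis good_def append_butlast_last_id list.size(3) nat.distinct(1))
  obtain qs' q where qs: "qs = qs' @ [q]" using step.prems(2)
    by (metis good_def append_butlast_last_id list.size(3) nat.distinct(1))
  have g1: "good n ps'" "p \<in> RLx n" using step.prems(1) unfolding ps good_def
    by (auto simp: nth_append) (metis less_Suc_eq nth_append_length)
  have g2: "good n qs'" "q \<in> RLx n" using step.prems(2) unfolding qs good_def
    by (auto simp: nth_append) (metis less_Suc_eq nth_append_length)
  define \<rho>1 where "\<rho>1 = foldr (\<circ>) ps' id"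
  define \<rho>2 where "\<rho>2 = foldr (\<circ>) qs' id"
  have L1: "\<rho>1 \<in> L (n + 1)" unfolding \<rho>1_def using good_L[OF g1(1) step.hyps(1)] .
  have L2: "\<rho>2 \<in> L (n + 1)" unfolding \<rho>2_def using good_L[OF g2(1) step.hyps(1)] .
  have eq: "\<rho>1 \<circ> p = \<rho>2 \<circ> q" using step.prems(3) unfolding ps qs \<rho>1_def \<rho>2_def foldr_snoc .
  have n1: "n \<noteq> 0" using step.hyps(1) by simp
  obtain v1 where v1: "v1 \<in> signed_support (n + 2)" "p = F n v1"
    using RL_F[of n p 1] g1(2) n1 step.hyps(1) by (auto simp: RLx_def)
  obtain v2 where v2: "v2 \<in> signed_support (n + 2)" "q = F n v2"
    using RL_F[of n q 1] g2(2) n1 step.hyps(1) by (auto simp: RLx_def)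
  have pv: "p v1 = int n + 2" using v1 F_val[OF step.hyps(1)] by simp
  have qv: "q v2 = int n + 2" using v2 F_val[OF step.hyps(1)] by simp
  have out: "int n + 2 \<notin> signed_support (n + 1)" by (simp add: signed_support_def)
  have r1: "\<rho>1 (int n + 2) = int n + 2" using B_out[OF _ out] L1 by (simp add: L_def)
  have r2: "\<rho>2 (int n + 2) = int n + 2" using B_out[OF _ out] L2 by (simp add: L_def)
  have "\<rho>2 (q v1) = int n + 2" using eq r1 pv by (metis comp_apply)
  then have "q v1 = int n + 2"
    using r2 permutes_inj[OF perm_L[OF L2]] by (metis injD)
  then have "q v1 = q v2" using qv by simp
  then have "v1 = v2" using permutes_inj[OF perm_L[OF F_L[OF step.hyps(1) v2(1)]]] v2(2) by (metis injD)
  then have pq: "p = q" using v1 v2 by simp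
  have pp: "p permutes signed_support (n + 2)" using perm_L F_L[OF step.hyps(1) v1(1)] v1(2) by simp
  have "\<rho>1 = \<rho>1 \<circ> p \<circ> inv p" using permutes_inv_o(1)[OF pp] by (simp add: o_assoc[symmetric])
  also have "\<dots> = \<rho>2 \<circ> p \<circ> inv p" using eq pq by simp
  also have "\<dots> = \<rho>2" using permutes_inv_o(1)[OF pp] by (simp add: o_assoc[symmetric])
  finally have "\<rho>1 = \<rho>2" .
  then have "ps' = qs'" using step.IH[OF g1(1) g2(1)] unfolding \<rho>1_def \<rho>2_def by blast
  then show ?case using ps qs pq by simp
qed

theorem theorem2p11:
  fixes n :: nat and \<pi> :: "int \<Rightarrow> int"
  assumes "n \<ge> 1" and "\<pi> \<in> L (n + 1)"
  shows "\<exists>!ps :: (int \<Rightarrow> int) list. length ps = n \<and> (\<forall>j<n. ps ! j \<in> RL n j)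
            \<and> \<pi> = foldr (\<circ>) ps id"
proof -
  have e: "(length ps = n \<and> (\<forall>j<n. ps ! j \<in> RL n j) \<and> \<pi> = foldr (\<circ>) ps id)
       = (good n ps \<and> \<pi> = foldr (\<circ>) ps id)" for ps
    using RL_eq[OF assms(1)] by (simp add: good_def)
  obtain ps where ps: "good n ps \<and> \<pi> = foldr (\<circ>) ps id" using existence[OF assms] by blast
  show ?thesis unfolding e
  proof (rule ex1I[of _ ps])
    show "good n ps \<and> \<pi> = foldr (\<circ>) ps id" by (rule ps)
  next
    fix qs assume "good n qs \<and> \<pi> = foldr (\<circ>) qs id"
    then have "good n qs" "foldr (\<circ>) qs id = foldr (\<circ>) ps id" using ps by auto
    then show "qs = ps" using uniqueness[OF assms(1), of qs ps] ps by blast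
  qed
qed

end
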